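(* Let $\Sigma,\Gamma$ be finite alphabets, each with at least two letters, and let $w \in \Sigma^*$. If there exist an injective morphism $h:\Sigma^*\to\Gamma^*$, a word $x\in\Gamma^*$ and a rational $r\ge 1$ such that $h(w) = x^r$ and $|x|_a = 1$ for some letter $a\in\Gamma$, then $\mathrm{E}_{\mathcal{I}}(w) = \infty$.
   Context: $|x|_a$ is the number of occurrences of the letter $a$ in $x$. For a nonempty word $v$ and integer $p\ge 0$, $v^{p/|v|}$ denotes the prefix of length $p$ of $vvv\cdots$. For a nonempty finite word $u$, $\mathrm{E}(u) = \sup\{ r \in \mathbb{Q} : u = v^r \text{ for some nonempty } v\}$. $\mathcal{I}$ is the set of injective morphisms $\Sigma^* \to \Gamma^*$ and $\mathrm{E}_{\mathcal{I}}(w) = \sup\{\mathrm{E}(h(w)) : h \in \mathcal{I}\}$. *)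

theory Defs
  imports Complex_Main "HOL-Library.Extended_Real"
begin

definition word_morphism :: "('a list \<Rightarrow> 'b list) \<Rightarrow> bool" where
  "word_morphism h \<longleftrightarrow> (\<forall>u v. h (u @ v) = h u @ h v)"

definition inj_morphisms :: "('a list \<Rightarrow> 'b list) set" where
  "inj_morphisms = {h. word_morphism h \<and> inj h}"

text \<open>v^(p/|v|): the prefix of length p of vvv...\<close>
definition pref_pow :: "'a list \<Rightarrow> nat \<Rightarrow> 'a list" where
  "pref_pow v p = map (\<lambda>i. v ! (i mod length v)) [0..<p]"

definition is_rpow :: "'a list \<Rightarrow> 'a list \<Rightarrow> rat \<Rightarrow> bool" where
  "is_rpow u v r \<longleftrightarrow> v \<noteq> [] \<and>
     (\<exists>p::nat. r = of_nat p / of_nat (length v) \<and> u = pref_pow v p)"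

definition exponent :: "'a list \<Rightarrow> ereal" where
  "exponent u = Sup {ereal (real_of_rat r) | r. \<exists>v. is_rpow u v r}"

definition exponent_I :: "'b itself \<Rightarrow> 'a list \<Rightarrow> ereal" where
  "exponent_I _ w = (SUP h \<in> (inj_morphisms :: ('a list \<Rightarrow> 'b list) set). exponent (h w))"

end

theory Submission
  imports Defs
begin

lemma pref_pow_len: "length (pref_pow x p) = p"
  by (simp add: pref_pow_def)

lemma pref_pow_base: "q \<le> length x \<Longrightarrow> pref_pow x q = take q x"
  by (rule nth_equalityI) (auto simp: pref_pow_def)

lemma pref_pow_step: "x \<noteq> [] \<Longrightarrow> pref_pow x (length x + m) = x @ pref_pow x m"
proof (rule nth_equalityI)
  assume "x \<noteq> []"
  show "length (pref_pow x (length x + m)) = length (x @ pref_pow x m)"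
    by (simp add: pref_pow_len)
  fix i assume "i < length (pref_pow x (length x + m))"
  then have i: "i < length x + m" by (simp add: pref_pow_len)
  show "pref_pow x (length x + m) ! i = (x @ pref_pow x m) ! i"
  proof (cases "i < length x")
    case True then show ?thesis using i by (simp add: pref_pow_def nth_append)
  next
    case False
    then have "i mod length x = (i - length x) mod length x"
      by (simp add: le_mod_geq)
    moreover have "[0..<m] ! (i - length x) = i - length x" using i False by simp
    ultimately show ?thesis using i False by (simp add: pref_pow_def nth_append)
  qed
qed

lemma pref_pow_decomp:
  "x \<noteq> [] \<Longrightarrow> q \<le> length x \<Longrightarrow>
    pref_pow x (k * length x + q) = concat (replicate k x) @ take q x"
proof (induction k)
  case 0 then show ?case by (simp add: pref_pow_base)
next
  case (Suc k)
  have "Suc k * length x + q = length x + (k * length x + q)" by simp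
  then show ?case using Suc pref_pow_step[of x "k * length x + q"] by (simp add: add.assoc)
qed

lemma swap_rep: "u @ concat (replicate N (v @ u)) = concat (replicate N (u @ v)) @ u"
  by (induction N) auto

definition sig :: "'b \<Rightarrow> 'b list \<Rightarrow> 'b list \<Rightarrow> nat \<Rightarrow> 'b list \<Rightarrow> 'b list" where
  "sig a y z N u = concat (map (\<lambda>c. if c = a then a # concat (replicate N (z @ y @ [a])) else [c]) u)"

lemma sig_append: "sig a y z N (u @ v) = sig a y z N u @ sig a y z N v"
  by (simp add: sig_def)

lemma sig_noa: "a \<notin> set u \<Longrightarrow> sig a y z N u = u"
  by (induction u) (auto simp: sig_def)

lemma sig_Cons: "sig a y z N (c # u) = c # (drop 1 (sig a y z N [c]) @ sig a y z N u)"
  by (simp add: sig_def)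

lemma sig_inj: "inj (sig a y z N)"
proof -
  have "\<forall>v. sig a y z N u = sig a y z N v \<longrightarrow> u = v" for u
  proof (induction u)
    case Nil
    show ?case
    proof (intro allI impI)
      fix v assume "sig a y z N [] = sig a y z N v"
      then show "[] = v" by (cases v) (auto simp: sig_def split: if_splits)
    qed
  next
    case (Cons c u)
    show ?case
    proof (intro allI impI)
      fix v assume eq: "sig a y z N (c # u) = sig a y z N v"
      show "c # u = v"
      proof (cases v)
        case Nil then show ?thesis using eq by (auto simp: sig_def split: if_splits)
      next
        case (Cons d v')
        have "c = d" using eq Cons sig_Cons[of a y z N c u] sig_Cons[of a y z N d v']
          by (simp only: list.inject)
        have e1: "sig a y z N (c # u) = sig a y z N [c] @ sig a y z N u" by (simp add: sig_def)
        have e2: "sig a y z N v = sig a y z N [c] @ sig a y z N v'"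
          using Cons \<open>c = d\<close> by (simp add: sig_def)
        have "sig a y z N u = sig a y z N v'" using eq e1 e2 by (simp only: same_append_eq)
        then show ?thesis using Cons.IH Cons \<open>c = d\<close> by simp
      qed
    qed
  qed
  then show ?thesis by (auto simp: inj_def)
qed

lemma sig_take:
  assumes x: "x = y @ a # z" and y: "a \<notin> set y" and z: "a \<notin> set z" and q: "q \<le> length x"
  shows "\<exists>j. sig a y z N (take q x) = concat (replicate j x) @ take q x"
proof (cases "q \<le> length y")
  case True
  then have "take q x = take q y" using x by simp
  moreover have "a \<notin> set (take q y)" using y by (meson in_set_takeD)
  ultimately show ?thesis by (metis sig_noa append_Nil concat.simps(1) replicate_0)
next
  case False
  then obtain t where t: "q = length y + Suc t" by (metis add_Suc_right less_imp_Suc_add not_le)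
  have tx: "take q x = y @ a # take t z" using x t by simp
  have az: "a \<notin> set (take t z)" using z by (meson in_set_takeD)
  have "sig a y z N (take q x) = y @ a # concat (replicate N (z @ y @ [a])) @ take t z"
    using tx sig_noa[OF y] sig_noa[OF az] by (simp add: sig_append sig_def)
  also have "\<dots> = (y @ [a]) @ concat (replicate N (z @ (y @ [a]))) @ take t z" by simp
  also have "\<dots> = concat (replicate N ((y @ [a]) @ z)) @ (y @ [a]) @ take t z"
    using swap_rep[of "y @ [a]" N z] by (metis append_assoc)
  also have "\<dots> = concat (replicate N x) @ take q x" using x tx by simp
  finally show ?thesis by blast
qed

lemma sig_full:
  assumes x: "x = y @ a # z" and y: "a \<notin> set y" and z: "a \<notin> set z"
  shows "sig a y z N x = concat (replicate N x) @ x"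
proof -
  have sa: "sig a y z N [a] = a # concat (replicate N (z @ y @ [a]))" by (simp add: sig_def)
  have "sig a y z N x = sig a y z N y @ sig a y z N [a] @ sig a y z N z"
    unfolding x by (simp only: sig_append[symmetric] append_Cons append_Nil)
  then have "sig a y z N x = y @ a # concat (replicate N (z @ y @ [a])) @ z"
    by (simp only: sig_noa[OF y] sig_noa[OF z] sa append_Cons)
  also have "\<dots> = (y @ [a]) @ concat (replicate N (z @ (y @ [a]))) @ z" by simp
  also have "\<dots> = concat (replicate N ((y @ [a]) @ z)) @ (y @ [a]) @ z"
    using swap_rep[of "y @ [a]" N z] by (metis append_assoc)
  also have "\<dots> = concat (replicate N x) @ x" using x by simp
  finally show ?thesis .
qed

lemma sig_rep: "sig a y z N (concat (replicate k x)) = concat (replicate k (sig a y z N x))"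
  by (induction k) (auto simp: sig_append, simp add: sig_def)

lemma concat_rep_rep: "concat (replicate k (concat (replicate m x))) = concat (replicate (k * m) x)"
  by (induction k) (auto simp: replicate_add)

lemma concat_rep_snoc: "concat (replicate j x) @ x = concat (replicate (Suc j) x)"
  by (induction j) auto

lemma ereal_all_nat: "(\<And>n::nat. ereal (real n) \<le> E) \<Longrightarrow> E = \<infinity>"
proof (cases E)
  case (real e)
  assume H: "\<And>n::nat. ereal (real n) \<le> E"
  obtain n :: nat where "e < real n" using reals_Archimedean2 by blast
  then show ?thesis using H[of n] real by simp
next
  case MInf
  assume H: "\<And>n::nat. ereal (real n) \<le> E"
  then show ?thesis using H[of 0] MInf by simp
qed simp

theorem lemma7:
  fixes w :: "'a::finite list"
    and h :: "'a list \<Rightarrow> 'b::finite list"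
    and x :: "'b list"
    and r :: rat
    and a :: 'b
  assumes "card (UNIV :: 'a set) \<ge> 2" and "card (UNIV :: 'b set) \<ge> 2"
    and "h \<in> inj_morphisms"
    and "r \<ge> 1"
    and "is_rpow (h w) x r"
    and "count_list x a = 1"
  shows "exponent_I TYPE('b) w = \<infinity>"
proof -
  from assms(5) obtain p where xne: "x \<noteq> []" and rp: "r = of_nat p / of_nat (length x)"
    and hw: "h w = pref_pow x p" unfolding is_rpow_def by blast
  have lpos: "length x > 0" using xne by simp
  have "of_nat (length x) \<le> (of_nat p :: rat)" using assms(4) rp lpos
    by (simp add: le_divide_eq)
  then have plx: "length x \<le> p" by simp
  define k where "k = p div length x"
  define q where "q = p mod length x"
  have pkq: "p = k * length x + q" unfolding k_def q_def by simp
  have q: "q \<le> length x" unfolding q_def using lpos by (simp add: less_imp_le)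
  have k1: "k \<ge> 1" unfolding k_def using plx lpos by (simp add: div_greater_zero_iff Suc_leI)
  have ax: "a \<in> set x" using assms(6) count_list_0_iff[of x a] by auto
  obtain y z where x: "x = y @ a # z" and y: "a \<notin> set y" using split_list_first[OF ax] by blast
  have "count_list z a = 0" using assms(6) x y by (simp add: count_list_0_iff)
  then have z: "a \<notin> set z" by (simp add: count_list_0_iff)
  have hmor: "word_morphism h" and hinj: "inj h" using assms(3) by (auto simp: inj_morphisms_def)
  have "ereal (real n) \<le> exponent_I TYPE('b) w" for n
  proof -
    define g where "g = sig a y z n \<circ> h"
    have gm: "word_morphism g" unfolding g_def word_morphism_def
      using hmor by (simp add: word_morphism_def sig_append)
    have gi: "inj g" unfolding g_def by (rule inj_compose[OF sig_inj hinj])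
    have gI: "g \<in> inj_morphisms" unfolding inj_morphisms_def using gm gi by simp
    obtain j where j: "sig a y z n (take q x) = concat (replicate j x) @ take q x"
      using sig_take[OF x y z q] by blast
    define j1 where "j1 = n"
    have j1: "sig a y z n x = concat (replicate j1 x) @ x"
      using sig_full[OF x y z] j1_def by simp
    have "g w = sig a y z n (concat (replicate k x) @ take q x)"
      unfolding g_def using hw pkq pref_pow_decomp[OF xne q] by simp
    also have "\<dots> = concat (replicate (k * Suc j1) x) @ concat (replicate j x) @ take q x"
      using j j1 by (simp only: sig_append sig_rep concat_rep_snoc concat_rep_rep)
    also have "\<dots> = concat (replicate (k * Suc j1 + j) x) @ take q x"
      by (simp add: replicate_add)
    also have "\<dots> = pref_pow x ((k * Suc j1 + j) * length x + q)"
      using pref_pow_decomp[OF xne q] by simp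
    finally have gw: "g w = pref_pow x ((k * Suc j1 + j) * length x + q)" .
    define P where "P = (k * Suc j1 + j) * length x + q"
    define r' :: rat where "r' = of_nat P / of_nat (length x)"
    have rp': "is_rpow (g w) x r'" unfolding is_rpow_def
      using xne gw by (intro conjI exI[of _ P]) (simp_all add: P_def r'_def)
    have "Suc j1 \<le> k * Suc j1" using mult_le_mono1[OF k1, of "Suc j1"] by simp
    then have "k * Suc j1 + j \<ge> j1 + 1" by linarith
    have "of_nat (k * Suc j1 + j) \<le> r'"
      unfolding r'_def P_def using lpos by (simp add: le_divide_eq)
    have "ereal (real_of_rat r') \<le> exponent (g w)"
      unfolding exponent_def using rp' by (intro Sup_upper) auto
    also have "exponent (g w) \<le> exponent_I TYPE('b) w"
      unfolding exponent_I_def using gI by (rule SUP_upper)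
    finally have r'le: "ereal (real_of_rat r') \<le> exponent_I TYPE('b) w" .
    have "n \<le> k * Suc j1 + j" using \<open>k * Suc j1 + j \<ge> j1 + 1\<close> j1_def by linarith
    then have "(of_nat n :: rat) \<le> of_nat (k * Suc j1 + j)" by (simp only: of_nat_le_iff)
    then have "of_nat n \<le> r'" using \<open>of_nat (k * Suc j1 + j) \<le> r'\<close> by (rule order_trans)
    then have "real n \<le> real_of_rat r'"
      using of_rat_less_eq[of "of_nat n" r'] by simp
    then show ?thesis by (intro order_trans[OF _ r'le]) simp
  qed
  then show ?thesis by (rule ereal_all_nat)
qed

end
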